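(* Let $\mathcal{G}$ be a groupoid with finite set of identities $\mathcal{G}_0$, let $\alpha = (\{ D_g \}, \{ \alpha_g \}, \{ w_{g,h} \})$ be a groupoid twisted partial action of $\mathcal{G}$ on a ring $R$ such that each $D_e$, $e\in\mathcal{G}_0$, has identity $1_e$, and let $\beta = (\{ E_g \}, \{ \beta_g \}, \{ u_{g,h} \})$ be a groupoid twisted global action of $\mathcal{G}$ on a ring $T$ which is a globalization of $\alpha$, where $\varphi_e(D_e)$ is identified with $D_e$ for each $e\in\mathcal{G}_0$ (so that $A=R\rtimes_{\alpha,w}\mathcal{G}$ is regarded as a subset of $B=T\rtimes_{\beta,u}\mathcal{G}$). Let $1_A=\sum_{e\in\mathcal{G}_0}1_e\delta_e$. Then: (i) $B1_A = \{ \sum_{g} c_g\delta_g \text{ (finite)} : c_g \in \beta_g(D_{d(g)}) \}$; (ii) $1_AB = \{ \sum_{g} c_g\delta_g \text{ (finite)} : c_g \in D_{r(g)} \}$; (iii) $1_AB1_A = A$; (iv) $B1_AB = B$. Here $B1_A=\{b1_A: b\in B\}$, $1_AB=\{1_Ab: b\in B\}$, $1_AB1_A=\{1_Ab1_A:b\in B\}$, and $B1_AB$ is the set of finite sums of elements $b1_Ab'$, $b,b'\in B$.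
   Context: Rings are associative, not necessarily unital. Groupoid: nonempty set $\mathcal{G}$ with partial associative product, each $g$ having right identity $d(g)=g^{-1}g$, left identity $r(g)=gg^{-1}$, inverse $g^{-1}$; $gh$ defined iff $d(g)=r(h)$; $\mathcal{G}_0$ the identities, $\mathcal{G}^2$ the composable pairs, $\mathcal{G}^3$ composable triples. $\mathcal{M}(A)$ is the multiplier ring of $A$ (pairs $(R,L)$ of a right-module endomorphism written on the right and a left-module endomorphism with $(aR)b=a(Lb)$; $aw=(a)R$, $wa=L(a)$); for unital $A$, $\mathcal{M}(A)\cong A$. A groupoid twisted partial action of $\mathcal{G}$ on a ring $R$: a triple $(\{D_g\},\{\alpha_g\},\{w_{g,h}\}_{(g,h)\in\mathcal{G}^2})$, $D_{r(g)}$ an ideal of $R$, $D_g$ an ideal of $D_{r(g)}$, $\alpha_g:D_{g^{-1}}\to D_g$ ring isomorphisms, $w_{g,h}$ invertible in $\mathcal{M}(D_gD_{gh})$, with for all $(g,h,t)\in\mathcal{G}^3$: (i) $D_g^2=D_g$, $D_gD_h=D_hD_g$; (ii) $D_e=D_{r(e)}$, $\alpha_e=\mathrm{id}$ for $e\in\mathcal{G}_0$; (iii) $\alpha_g(D_{g^{-1}}D_h)=D_gD_{gh}$; (iv) $\alpha_g\alpha_h(a)=w_{g,h}\alpha_{gh}(a)w_{g,h}^{-1}$ for $a\in D_{h^{-1}}D_{h^{-1}g^{-1}}$; (v) $w_{r(g),g}=w_{g,d(g)}=\mathrm{id}_{\mathcal{M}(D_g)}$; (vi) $\alpha_g(aw_{h,t})w_{g,ht}=\alpha_g(a)w_{g,h}w_{gh,t}$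 for $a\in D_{g^{-1}}D_hD_{ht}$. It is global if $D_g=D_{r(g)}$ for all $g$. A global action $\beta=(\{E_g\},\{\beta_g\},\{u_{g,h}\})$ on $T$ is a globalization of $\alpha$ if there are ring monomorphisms $\varphi_e:D_e\to E_e$ ($e\in\mathcal{G}_0$) with: $\varphi_e(D_e)$ an ideal of $E_e$; $E_g=\sum_{r(h)=r(g)}\beta_h(\varphi_{d(h)}(D_{d(h)}))$; $\varphi_{r(g)}(D_g)=\varphi_{r(g)}(D_{r(g)})\cap\beta_g(\varphi_{d(g)}(D_{d(g)}))$; $\beta_g\varphi_{d(g)}=\varphi_{r(g)}\alpha_g$ on $D_{g^{-1}}$; $\varphi_{r(g)}(aw_{g,h})=\varphi_{r(g)}(a)u_{g,h}$ and $\varphi_{r(g)}(w_{g,h}a)=u_{g,h}\varphi_{r(g)}(a)$ for $a\in D_gD_{gh}$. Twisted crossed product: $R\rtimes_{\alpha,w}\mathcal{G}=\bigoplus_g D_g\delta_g$ with $(a_g\delta_g)(b_h\delta_h)=\alpha_g(\alpha_g^{-1}(a_g)b_h)w_{g,h}\delta_{gh}$ if $(g,h)\in\mathcal{G}^2$ and $0$ otherwise; $T\rtimes_{\beta,u}\mathcal{G}$ is defined in the same way. *)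

theory Defs
  imports Main
begin

(* Groupoid given by carrier G, domain d, range r, inverse iv and partial product m;
   m g h is meaningful iff d g = r h. *)
definition groupoid ::
  "'g set \<Rightarrow> ('g \<Rightarrow> 'g) \<Rightarrow> ('g \<Rightarrow> 'g) \<Rightarrow> ('g \<Rightarrow> 'g) \<Rightarrow> ('g \<Rightarrow> 'g \<Rightarrow> 'g) \<Rightarrow> bool" where
  "groupoid G d r iv m \<longleftrightarrow>
     G \<noteq> {} \<and>
     (\<forall>g\<in>G. d g \<in> G \<and> r g \<in> G \<and> iv g \<in> G) \<and>
     (\<forall>g\<in>G. \<forall>h\<in>G. d g = r h \<longrightarrow> m g h \<in> G \<and> d (m g h) = d h \<and> r (m g h) = r g) \<and>
     (\<forall>g\<in>G. \<forall>h\<in>G. \<forall>k\<in>G. d g = r h \<and> d h = r k \<longrightarrow> m (m g h) k = m g (m h k)) \<and>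
     (\<forall>g\<in>G. d (d g) = d g \<and> r (d g) = d g \<and> d (r g) = r g \<and> r (r g) = r g) \<and>
     (\<forall>g\<in>G. m g (d g) = g \<and> m (r g) g = g) \<and>
     (\<forall>g\<in>G. d (iv g) = r g \<and> r (iv g) = d g \<and> m (iv g) g = d g \<and> m g (iv g) = r g)"

definition is_ideal :: "'a::ring set \<Rightarrow> 'a set \<Rightarrow> bool" where
  "is_ideal I S \<longleftrightarrow> I \<subseteq> S \<and> 0 \<in> I \<and>
     (\<forall>a\<in>I. \<forall>b\<in>I. a + b \<in> I) \<and> (\<forall>a\<in>I. - a \<in> I) \<and>
     (\<forall>s\<in>S. \<forall>a\<in>I. s * a \<in> I \<and> a * s \<in> I)"

definition idealprod :: "'a::ring set \<Rightarrow> 'a set \<Rightarrow> 'a set" where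
  "idealprod A B = {x. \<exists>(n::nat) f h. x = (\<Sum>i<n. f i * h i) \<and> (\<forall>i<n. f i \<in> A \<and> h i \<in> B)}"

definition sum_sets :: "'i set \<Rightarrow> ('i \<Rightarrow> 'a::ring set) \<Rightarrow> 'a set" where
  "sum_sets I S = {x. \<exists>(n::nat) f j. x = (\<Sum>i<n. f i) \<and> (\<forall>i<n. j i \<in> I \<and> f i \<in> S (j i))}"

definition ring_iso_on :: "('a::ring \<Rightarrow> 'b::ring) \<Rightarrow> 'a set \<Rightarrow> 'b set \<Rightarrow> bool" where
  "ring_iso_on f A B \<longleftrightarrow> bij_betw f A B \<and>
     (\<forall>a\<in>A. \<forall>b\<in>A. f (a + b) = f a + f b \<and> f (a * b) = f a * f b)"

definition ring_mono_on :: "('a::ring \<Rightarrow> 'b::ring) \<Rightarrow> 'a set \<Rightarrow> 'b set \<Rightarrow> bool" where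
  "ring_mono_on f A B \<longleftrightarrow> inj_on f A \<and> f ` A \<subseteq> B \<and>
     (\<forall>a\<in>A. \<forall>b\<in>A. f (a + b) = f a + f b \<and> f (a * b) = f a * f b)"

(* multiplier (R,L) of the ring A: a w = R a, w a = L a *)
definition is_mult :: "'a::ring set \<Rightarrow> ('a \<Rightarrow> 'a) \<Rightarrow> ('a \<Rightarrow> 'a) \<Rightarrow> bool" where
  "is_mult A Rm Lm \<longleftrightarrow> (\<forall>a\<in>A. Rm a \<in> A \<and> Lm a \<in> A) \<and>
     (\<forall>a\<in>A. \<forall>b\<in>A. Rm (a + b) = Rm a + Rm b \<and> Lm (a + b) = Lm a + Lm b \<and>
        Rm (a * b) = a * Rm b \<and> Lm (a * b) = Lm a * b \<and> Rm a * b = a * Lm b)"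

definition inv_mult :: "'a::ring set \<Rightarrow> ('a \<Rightarrow> 'a) \<Rightarrow> ('a \<Rightarrow> 'a) \<Rightarrow> ('a \<Rightarrow> 'a) \<Rightarrow> ('a \<Rightarrow> 'a) \<Rightarrow> bool" where
  "inv_mult A Rm Lm Rm' Lm' \<longleftrightarrow> is_mult A Rm Lm \<and> is_mult A Rm' Lm' \<and>
     (\<forall>a\<in>A. Rm' (Rm a) = a \<and> Rm (Rm' a) = a \<and> Lm (Lm' a) = a \<and> Lm' (Lm a) = a)"

(* groupoid twisted partial action (D, alpha, w) of G on the ring 'a;
   w_{g,h} = (wR g h, wL g h) with inverse (wiR g h, wiL g h) *)
definition twisted_partial_action ::
  "'g set \<Rightarrow> ('g \<Rightarrow> 'g) \<Rightarrow> ('g \<Rightarrow> 'g) \<Rightarrow> ('g \<Rightarrow> 'g) \<Rightarrow> ('g \<Rightarrow> 'g \<Rightarrow> 'g) \<Rightarrow>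
   ('g \<Rightarrow> 'a::ring set) \<Rightarrow> ('g \<Rightarrow> 'a \<Rightarrow> 'a) \<Rightarrow>
   ('g \<Rightarrow> 'g \<Rightarrow> 'a \<Rightarrow> 'a) \<Rightarrow> ('g \<Rightarrow> 'g \<Rightarrow> 'a \<Rightarrow> 'a) \<Rightarrow>
   ('g \<Rightarrow> 'g \<Rightarrow> 'a \<Rightarrow> 'a) \<Rightarrow> ('g \<Rightarrow> 'g \<Rightarrow> 'a \<Rightarrow> 'a) \<Rightarrow> bool" where
  "twisted_partial_action G d r iv m D \<alpha> wR wL wiR wiL \<longleftrightarrow>
     (\<forall>g\<in>G. is_ideal (D (r g)) UNIV \<and> is_ideal (D g) (D (r g))) \<and>
     (\<forall>g\<in>G. ring_iso_on (\<alpha> g) (D (iv g)) (D g)) \<and>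
     (\<forall>g\<in>G. \<forall>h\<in>G. d g = r h \<longrightarrow>
        inv_mult (idealprod (D g) (D (m g h))) (wR g h) (wL g h) (wiR g h) (wiL g h)) \<and>
     (\<forall>g\<in>G. \<forall>h\<in>G. \<forall>t\<in>G. d g = r h \<and> d h = r t \<longrightarrow>
        idealprod (D g) (D g) = D g \<and> idealprod (D g) (D h) = idealprod (D h) (D g) \<and>
        \<alpha> g ` idealprod (D (iv g)) (D h) = idealprod (D g) (D (m g h)) \<and>
        (\<forall>a\<in>idealprod (D (iv h)) (D (iv (m g h))).
            \<alpha> g (\<alpha> h a) = wiR g h (wL g h (\<alpha> (m g h) a))) \<and>
        (\<forall>a\<in>D g. wR (r g) g a = a \<and> wL (r g) g a = a \<and> wR g (d g) a = a \<and> wL g (d g) a = a) \<and>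
        (\<forall>a\<in>idealprod (idealprod (D (iv g)) (D h)) (D (m h t)).
            wR g (m h t) (\<alpha> g (wR h t a)) = wR (m g h) t (wR g h (\<alpha> g a)))) \<and>
     (\<forall>e\<in>d ` G. D e = D (r e) \<and> (\<forall>a\<in>D e. \<alpha> e a = a))"

definition global_action where
  "global_action G d r iv m E \<beta> uR uL uiR uiL \<longleftrightarrow>
     twisted_partial_action G d r iv m E \<beta> uR uL uiR uiL \<and> (\<forall>g\<in>G. E g = E (r g))"

definition globalization ::
  "'g set \<Rightarrow> ('g \<Rightarrow> 'g) \<Rightarrow> ('g \<Rightarrow> 'g) \<Rightarrow> ('g \<Rightarrow> 'g) \<Rightarrow> ('g \<Rightarrow> 'g \<Rightarrow> 'g) \<Rightarrow>
   ('g \<Rightarrow> 'a::ring set) \<Rightarrow> ('g \<Rightarrow> 'a \<Rightarrow> 'a) \<Rightarrow>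
   ('g \<Rightarrow> 'g \<Rightarrow> 'a \<Rightarrow> 'a) \<Rightarrow> ('g \<Rightarrow> 'g \<Rightarrow> 'a \<Rightarrow> 'a) \<Rightarrow>
   ('g \<Rightarrow> 'b::ring set) \<Rightarrow> ('g \<Rightarrow> 'b \<Rightarrow> 'b) \<Rightarrow>
   ('g \<Rightarrow> 'g \<Rightarrow> 'b \<Rightarrow> 'b) \<Rightarrow> ('g \<Rightarrow> 'g \<Rightarrow> 'b \<Rightarrow> 'b) \<Rightarrow>
   ('g \<Rightarrow> 'a \<Rightarrow> 'b) \<Rightarrow> bool" where
  "globalization G d r iv m D \<alpha> wR wL E \<beta> uR uL \<phi> \<longleftrightarrow>
     (\<forall>e\<in>d ` G. ring_mono_on (\<phi> e) (D e) (E e) \<and> is_ideal (\<phi> e ` D e) (E e)) \<and>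
     (\<forall>g\<in>G. E g = sum_sets {h\<in>G. r h = r g} (\<lambda>h. \<beta> h ` \<phi> (d h) ` D (d h))) \<and>
     (\<forall>g\<in>G. \<phi> (r g) ` D g = \<phi> (r g) ` D (r g) \<inter> \<beta> g ` \<phi> (d g) ` D (d g)) \<and>
     (\<forall>g\<in>G. \<forall>a\<in>D (iv g). \<beta> g (\<phi> (d g) a) = \<phi> (r g) (\<alpha> g a)) \<and>
     (\<forall>g\<in>G. \<forall>h\<in>G. d g = r h \<longrightarrow> (\<forall>a\<in>idealprod (D g) (D (m g h)).
        \<phi> (r g) (wR g h a) = uR g h (\<phi> (r g) a) \<and> \<phi> (r g) (wL g h a) = uL g h (\<phi> (r g) a)))"

(* elements  sum_g c_g delta_g  (finite) with c_g \<in> P g, represented as finitely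
   supported functions G \<rightarrow> ring *)
definition cp_set :: "'g set \<Rightarrow> ('g \<Rightarrow> 'a::zero set) \<Rightarrow> ('g \<Rightarrow> 'a) set" where
  "cp_set G P = {x. finite {g. x g \<noteq> 0} \<and> (\<forall>g. x g \<noteq> 0 \<longrightarrow> g \<in> G) \<and> (\<forall>g\<in>G. x g \<in> P g)}"

(* multiplication of the twisted crossed product:
   (a delta_g)(b delta_h) = beta_g(beta_g^{-1}(a) b) u_{g,h} delta_{gh} if d g = r h, else 0 *)
definition cp_mult ::
  "'g set \<Rightarrow> ('g \<Rightarrow> 'g) \<Rightarrow> ('g \<Rightarrow> 'g) \<Rightarrow> ('g \<Rightarrow> 'g) \<Rightarrow> ('g \<Rightarrow> 'g \<Rightarrow> 'g) \<Rightarrow>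
   ('g \<Rightarrow> 'a::ring set) \<Rightarrow> ('g \<Rightarrow> 'a \<Rightarrow> 'a) \<Rightarrow> ('g \<Rightarrow> 'g \<Rightarrow> 'a \<Rightarrow> 'a) \<Rightarrow>
   ('g \<Rightarrow> 'a) \<Rightarrow> ('g \<Rightarrow> 'a) \<Rightarrow> ('g \<Rightarrow> 'a)" where
  "cp_mult G d r iv m E \<beta> uR x y = (\<lambda>k.
     \<Sum>p\<in>{(g, h). g \<in> G \<and> h \<in> G \<and> x g \<noteq> 0 \<and> y h \<noteq> 0 \<and> d g = r h \<and> m g h = k}.
        uR (fst p) (snd p)
          (\<beta> (fst p) (inv_into (E (iv (fst p))) (\<beta> (fst p)) (x (fst p)) * y (snd p))))"

end

theory Submission
  imports Defs
begin

lemma ideal_sum: "is_ideal I S \<Longrightarrow> (\<forall>x\<in>A. f x \<in> I) \<Longrightarrow> sum f A \<in> I"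
proof (induction A rule: infinite_finite_induct)
  case (infinite A) then show ?case by (simp add: is_ideal_def)
next
  case empty then show ?case by (simp add: is_ideal_def)
next
  case (insert x F) then show ?case by (simp add: is_ideal_def)
qed

lemma pairs_single: "P \<subseteq> {p0} \<Longrightarrow> (p0 \<notin> P \<Longrightarrow> f p0 = 0) \<Longrightarrow> sum f P = f p0"
  by (cases "p0 \<in> P") (auto simp: subset_singleton_iff)

lemma sum_split_nat: "(\<Sum>i<n+n2. (f::nat\<Rightarrow>'a::comm_monoid_add) i) = (\<Sum>i<n. f i) + (\<Sum>i<n2. f (n+i))"
  by (induction n2) (auto simp: add.assoc)

locale setting =
  fixes G :: "'g set" and d r iv :: "'g \<Rightarrow> 'g" and m :: "'g \<Rightarrow> 'g \<Rightarrow> 'g"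
    and D :: "'g \<Rightarrow> 'r::ring set" and \<alpha> :: "'g \<Rightarrow> 'r \<Rightarrow> 'r"
    and wR wL wiR wiL :: "'g \<Rightarrow> 'g \<Rightarrow> 'r \<Rightarrow> 'r"
    and one :: "'g \<Rightarrow> 'r"
    and E :: "'g \<Rightarrow> 't::ring set" and \<beta> :: "'g \<Rightarrow> 't \<Rightarrow> 't"
    and uR uL uiR uiL :: "'g \<Rightarrow> 'g \<Rightarrow> 't \<Rightarrow> 't"
    and \<phi> :: "'g \<Rightarrow> 'r \<Rightarrow> 't"
  assumes grpd: "groupoid G d r iv m"
    and fin: "finite (d ` G)"
    and alpha: "twisted_partial_action G d r iv m D \<alpha> wR wL wiR wiL"
    and units: "\<forall>e\<in>d ` G. one e \<in> D e \<and> (\<forall>x\<in>D e. one e * x = x \<and> x * one e = x)"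
    and beta: "global_action G d r iv m E \<beta> uR uL uiR uiL"
    and glob: "globalization G d r iv m D \<alpha> wR wL E \<beta> uR uL \<phi>"
begin

abbreviation "Bs \<equiv> cp_set G E"
abbreviation "oneA \<equiv> (\<lambda>k. if k \<in> d ` G then \<phi> k (one k) else 0)"
abbreviation "mul \<equiv> cp_mult G d r iv m E \<beta> uR"
abbreviation "binv g c \<equiv> inv_into (E (iv g)) (\<beta> g) c"
abbreviation "sgl g c \<equiv> (\<lambda>k. if k = g then c else 0)"
abbreviation "II g \<equiv> \<beta> g ` \<phi> (d g) ` D (d g)"
abbreviation "JJ g \<equiv> \<phi> (r g) ` D (r g)"
abbreviation "rho g \<equiv> \<beta> g (\<phi> (d g) (one (d g)))"
abbreviation "lam g \<equiv> \<phi> (r g) (one (r g))"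

lemma dG: "g \<in> G \<Longrightarrow> d g \<in> G" and rG: "g \<in> G \<Longrightarrow> r g \<in> G" and ivG: "g \<in> G \<Longrightarrow> iv g \<in> G"
  using grpd unfolding groupoid_def by auto
lemma mG: "g \<in> G \<Longrightarrow> h \<in> G \<Longrightarrow> d g = r h \<Longrightarrow> m g h \<in> G"
  and dm: "g \<in> G \<Longrightarrow> h \<in> G \<Longrightarrow> d g = r h \<Longrightarrow> d (m g h) = d h"
  and rm: "g \<in> G \<Longrightarrow> h \<in> G \<Longrightarrow> d g = r h \<Longrightarrow> r (m g h) = r g"
  using grpd unfolding groupoid_def by auto
lemma assoc: "g \<in> G \<Longrightarrow> h \<in> G \<Longrightarrow> k \<in> G \<Longrightarrow> d g = r h \<Longrightarrow> d h = r k \<Longrightarrow> m (m g h) k = m g (m h k)"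
  using grpd unfolding groupoid_def by blast
lemma dd: "g \<in> G \<Longrightarrow> d (d g) = d g" and rd: "g \<in> G \<Longrightarrow> r (d g) = d g"
  and dr: "g \<in> G \<Longrightarrow> d (r g) = r g" and rr: "g \<in> G \<Longrightarrow> r (r g) = r g"
  and mgd: "g \<in> G \<Longrightarrow> m g (d g) = g" and mrg: "g \<in> G \<Longrightarrow> m (r g) g = g"
  and div: "g \<in> G \<Longrightarrow> d (iv g) = r g" and riv: "g \<in> G \<Longrightarrow> r (iv g) = d g"
  and mivg: "g \<in> G \<Longrightarrow> m (iv g) g = d g" and mgiv: "g \<in> G \<Longrightarrow> m g (iv g) = r g"
  using grpd unfolding groupoid_def by auto

lemma ident: assumes "e \<in> d ` G" shows "e \<in> G" "d e = e" "r e = e" "iv e = e"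
proof -
  obtain g where g: "g \<in> G" "e = d g" using assms by auto
  show eG: "e \<in> G" using g dG by auto
  show de: "d e = e" using g dd by auto
  show re: "r e = e" using g rd by auto
  have "iv e \<in> G" using eG ivG by auto
  have "m (iv e) e = d e" using mivg eG by auto
  moreover have "m (iv e) (d (iv e)) = iv e" using mgd \<open>iv e \<in> G\<close> by auto
  moreover have "d (iv e) = e" using div eG re by auto
  ultimately show "iv e = e" using de by auto
qed

lemma rdG: "g \<in> G \<Longrightarrow> r g \<in> d ` G"
  using div ivG by (metis image_eqI)
lemma ddG: "g \<in> G \<Longrightarrow> d g \<in> d ` G" by auto

lemma beta_tpa: "twisted_partial_action G d r iv m E \<beta> uR uL uiR uiL"
  and Er: "g \<in> G \<Longrightarrow> E g = E (r g)"
  using beta unfolding global_action_def by auto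

lemma E_ideal: "g \<in> G \<Longrightarrow> is_ideal (E g) UNIV"
  using beta_tpa Er unfolding twisted_partial_action_def by metis

lemma E0: "g \<in> G \<Longrightarrow> 0 \<in> E g" using E_ideal unfolding is_ideal_def by auto
lemma Eadd: "g \<in> G \<Longrightarrow> a \<in> E g \<Longrightarrow> b \<in> E g \<Longrightarrow> a + b \<in> E g"
  using E_ideal unfolding is_ideal_def by auto
lemma EmultL: "g \<in> G \<Longrightarrow> b \<in> E g \<Longrightarrow> a * b \<in> E g"
  using E_ideal unfolding is_ideal_def by auto
lemma EmultR: "g \<in> G \<Longrightarrow> a \<in> E g \<Longrightarrow> a * b \<in> E g"
  using E_ideal unfolding is_ideal_def by auto

lemma Eiv: "g \<in> G \<Longrightarrow> E (iv g) = E (d g)"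
  using Er[of "iv g"] ivG riv by auto

lemma beta_iso: "g \<in> G \<Longrightarrow> ring_iso_on (\<beta> g) (E (iv g)) (E g)"
  using beta_tpa unfolding twisted_partial_action_def by auto

lemma beta_bij: "g \<in> G \<Longrightarrow> bij_betw (\<beta> g) (E (iv g)) (E g)"
  using beta_iso unfolding ring_iso_on_def by auto
lemma beta_mult: "g \<in> G \<Longrightarrow> a \<in> E (iv g) \<Longrightarrow> b \<in> E (iv g) \<Longrightarrow> \<beta> g (a * b) = \<beta> g a * \<beta> g b"
  using beta_iso unfolding ring_iso_on_def by auto
lemma beta_add: "g \<in> G \<Longrightarrow> a \<in> E (iv g) \<Longrightarrow> b \<in> E (iv g) \<Longrightarrow> \<beta> g (a + b) = \<beta> g a + \<beta> g b"
  using beta_iso unfolding ring_iso_on_def by auto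
lemma beta_in: "g \<in> G \<Longrightarrow> a \<in> E (iv g) \<Longrightarrow> \<beta> g a \<in> E g"
  using beta_bij bij_betw_apply by metis
lemma beta0: "g \<in> G \<Longrightarrow> \<beta> g 0 = 0"
proof -
  assume g: "g \<in> G"
  have z: "0 \<in> E (iv g)" using E0 ivG g by auto
  have "\<beta> g (0 + 0) = \<beta> g 0 + \<beta> g 0" using beta_add[OF g z z] .
  then show ?thesis by simp
qed
lemma binv_in: "g \<in> G \<Longrightarrow> c \<in> E g \<Longrightarrow> binv g c \<in> E (iv g)"
  using beta_bij inv_into_into bij_betw_imp_surj_on by metis
lemma beta_binv: "g \<in> G \<Longrightarrow> c \<in> E g \<Longrightarrow> \<beta> g (binv g c) = c"
  using beta_bij f_inv_into_f bij_betw_imp_surj_on by metis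
lemma binv_beta: "g \<in> G \<Longrightarrow> a \<in> E (iv g) \<Longrightarrow> binv g (\<beta> g a) = a"
  using beta_bij inv_into_f_f bij_betw_imp_inj_on by metis
lemma binv0: "g \<in> G \<Longrightarrow> binv g 0 = 0"
  using binv_beta[of g 0] beta0 E0 ivG by auto

lemma beta_id: "e \<in> d ` G \<Longrightarrow> a \<in> E e \<Longrightarrow> \<beta> e a = a"
  using beta_tpa unfolding twisted_partial_action_def by auto

lemma triple: "g \<in> G \<Longrightarrow> idealprod (E g) (E g) = E g \<and>
   (\<forall>a\<in>E g. uR (r g) g a = a \<and> uR g (d g) a = a)"
proof -
  assume g: "g \<in> G"
  have "d g \<in> G" "d g = r (d g)" "d (d g) = r (d g)" using g dG rd dd by auto
  then show ?thesis using beta_tpa g unfolding twisted_partial_action_def by metis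
qed

lemma u_inv: "g \<in> G \<Longrightarrow> h \<in> G \<Longrightarrow> d g = r h \<Longrightarrow> inv_mult (E g) (uR g h) (uL g h) (uiR g h) (uiL g h)"
proof -
  assume a: "g \<in> G" "h \<in> G" "d g = r h"
  have "E (m g h) = E g" using Er[of "m g h"] Er[of g] mG rm a by auto
  then have "idealprod (E g) (E (m g h)) = E g" using triple a by auto
  then show ?thesis using beta_tpa a unfolding twisted_partial_action_def by metis
qed

lemma uR_in: "g \<in> G \<Longrightarrow> h \<in> G \<Longrightarrow> d g = r h \<Longrightarrow> a \<in> E g \<Longrightarrow> uR g h a \<in> E g"
  using u_inv unfolding inv_mult_def is_mult_def by blast
lemma uR0: "g \<in> G \<Longrightarrow> h \<in> G \<Longrightarrow> d g = r h \<Longrightarrow> uR g h 0 = 0"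
proof -
  assume a: "g \<in> G" "h \<in> G" "d g = r h"
  have "uR g h (0 + 0) = uR g h 0 + uR g h 0" using u_inv[OF a] E0[OF a(1)] unfolding inv_mult_def is_mult_def by blast
  then show ?thesis by simp
qed

lemma phi_mono: "e \<in> d ` G \<Longrightarrow> ring_mono_on (\<phi> e) (D e) (E e)"
  and phi_ideal: "e \<in> d ` G \<Longrightarrow> is_ideal (\<phi> e ` D e) (E e)"
  and E_sum: "g \<in> G \<Longrightarrow> E g = sum_sets {h\<in>G. r h = r g} (\<lambda>h. \<beta> h ` \<phi> (d h) ` D (d h))"
  and glob_int: "g \<in> G \<Longrightarrow> \<phi> (r g) ` D g = \<phi> (r g) ` D (r g) \<inter> \<beta> g ` \<phi> (d g) ` D (d g)"
proof -
  note gl = glob[unfolded globalization_def]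
  show "e \<in> d ` G \<Longrightarrow> ring_mono_on (\<phi> e) (D e) (E e)" using gl by (elim conjE) (drule bspec, assumption, elim conjE, assumption)
  show "e \<in> d ` G \<Longrightarrow> is_ideal (\<phi> e ` D e) (E e)" using gl by (elim conjE) (drule bspec, assumption, elim conjE, assumption)
  show "g \<in> G \<Longrightarrow> E g = sum_sets {h\<in>G. r h = r g} (\<lambda>h. \<beta> h ` \<phi> (d h) ` D (d h))" using gl by (elim conjE) (drule bspec, assumption, assumption)
  show "g \<in> G \<Longrightarrow> \<phi> (r g) ` D g = \<phi> (r g) ` D (r g) \<inter> \<beta> g ` \<phi> (d g) ` D (d g)" using gl by (elim conjE) (drule bspec, assumption, assumption)
qed

lemma phi_in: "e \<in> d ` G \<Longrightarrow> a \<in> D e \<Longrightarrow> \<phi> e a \<in> E e"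
  using phi_mono unfolding ring_mono_on_def by auto
lemma phi_mult: "e \<in> d ` G \<Longrightarrow> a \<in> D e \<Longrightarrow> b \<in> D e \<Longrightarrow> \<phi> e (a * b) = \<phi> e a * \<phi> e b"
  using phi_mono unfolding ring_mono_on_def by auto
lemma one_in: "e \<in> d ` G \<Longrightarrow> one e \<in> D e" using units by auto
lemma one_l: "e \<in> d ` G \<Longrightarrow> a \<in> D e \<Longrightarrow> one e * a = a" using units by auto
lemma one_r: "e \<in> d ` G \<Longrightarrow> a \<in> D e \<Longrightarrow> a * one e = a" using units by auto

lemma rho_in_E: assumes g: "g \<in> G" shows "rho g \<in> E g"
proof -
  have e: "d g \<in> d ` G" using g by auto
  have "\<phi> (d g) (one (d g)) \<in> E (iv g)" using phi_in[OF e one_in[OF e]] Eiv[OF g] by simp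
  then show ?thesis using beta_in[OF g] by simp
qed
lemma II_sub: assumes g: "g \<in> G" shows "II g \<subseteq> E g"
proof
  fix x assume "x \<in> II g"
  then obtain a where a: "a \<in> D (d g)" "x = \<beta> g (\<phi> (d g) a)" by auto
  have e: "d g \<in> d ` G" using g by auto
  have "\<phi> (d g) a \<in> E (iv g)" using phi_in[OF e a(1)] Eiv[OF g] by simp
  then show "x \<in> E g" using beta_in[OF g] a by simp
qed
lemma rho_in: "g \<in> G \<Longrightarrow> rho g \<in> II g"
  using one_in[OF ddG] by (intro imageI) 
lemma rho_unit: assumes g: "g \<in> G" and c: "c \<in> II g" shows "c * rho g = c" "rho g * c = c"
proof -
  obtain a where a: "a \<in> D (d g)" "c = \<beta> g (\<phi> (d g) a)" using c by auto
  have e: "d g \<in> d ` G" using g by auto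
  have i1: "\<phi> (d g) a \<in> E (iv g)" using phi_in[OF e a(1)] Eiv g by auto
  have i2: "\<phi> (d g) (one (d g)) \<in> E (iv g)" using phi_in[OF e one_in[OF e]] Eiv g by auto
  show "c * rho g = c" using a beta_mult[OF g i1 i2] phi_mult[OF e a(1) one_in[OF e]] one_r[OF e a(1)] by simp
  show "rho g * c = c" using a beta_mult[OF g i2 i1] phi_mult[OF e one_in[OF e] a(1)] one_l[OF e a(1)] by simp
qed
lemma mult_rho_in: assumes g: "g \<in> G" and x: "x \<in> E g" shows "x * rho g \<in> II g"
proof -
  have e: "d g \<in> d ` G" using g by auto
  have b: "binv g x \<in> E (d g)" using binv_in[OF g x] Eiv g by auto
  have i2: "\<phi> (d g) (one (d g)) \<in> \<phi> (d g) ` D (d g)" using one_in[OF e] by auto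
  have p: "binv g x * \<phi> (d g) (one (d g)) \<in> \<phi> (d g) ` D (d g)"
    using phi_ideal[OF e] b i2 unfolding is_ideal_def by blast
  have "x * rho g = \<beta> g (binv g x * \<phi> (d g) (one (d g)))"
    using beta_mult[OF g binv_in[OF g x]] phi_in[OF e one_in[OF e]] Eiv g beta_binv[OF g x] by simp
  then show ?thesis using p by auto
qed
lemma rho0: "g \<in> G \<Longrightarrow> \<phi> (d g) (one (d g)) = 0 \<Longrightarrow> rho g = 0"
  using beta0 by simp

lemma JJ_sub: assumes g: "g \<in> G" shows "JJ g \<subseteq> E g"
  using phi_in[OF rdG[OF g]] Er[OF g] by auto
lemma lam_in: "g \<in> G \<Longrightarrow> lam g \<in> JJ g" using one_in[OF rdG] by (intro imageI)
lemma lam_unit: assumes g: "g \<in> G" and c: "c \<in> JJ g" shows "lam g * c = c"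
proof -
  obtain a where a: "a \<in> D (r g)" "c = \<phi> (r g) a" using c by auto
  have e: "r g \<in> d ` G" using rdG g by auto
  show ?thesis using a phi_mult[OF e one_in[OF e] a(1)] one_l[OF e a(1)] by simp
qed
lemma JJ_multR: assumes "g \<in> G" "c \<in> JJ g" "x \<in> E g" shows "c * x \<in> JJ g"
proof -
  have "is_ideal (JJ g) (E (r g))" using phi_ideal[OF rdG[OF assms(1)]] .
  then show ?thesis using assms Er[OF assms(1)] unfolding is_ideal_def by auto
qed
lemma JJ_multL: assumes "g \<in> G" "c \<in> JJ g" "x \<in> E g" shows "x * c \<in> JJ g"
proof -
  have "is_ideal (JJ g) (E (r g))" using phi_ideal[OF rdG[OF assms(1)]] .
  then show ?thesis using assms Er[OF assms(1)] unfolding is_ideal_def by auto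
qed
lemma lam_mult_in: "g \<in> G \<Longrightarrow> x \<in> E g \<Longrightarrow> lam g * x \<in> JJ g"
  using JJ_multR[OF _ lam_in] by simp

lemma mult_right_oneA:
  assumes xs: "\<forall>k. x k \<noteq> 0 \<longrightarrow> k \<in> G" and xE: "\<forall>k\<in>G. x k \<in> E k"
  shows "mul x oneA k = (if k \<in> G then x k * rho k else 0)"
proof -
  let ?P = "{(g,h). g \<in> G \<and> h \<in> G \<and> x g \<noteq> 0 \<and> oneA h \<noteq> 0 \<and> d g = r h \<and> m g h = k}"
  let ?f = "\<lambda>p. uR (fst p) (snd p) (\<beta> (fst p) (binv (fst p) (x (fst p)) * oneA (snd p)))"
  have eq: "mul x oneA k = sum ?f ?P" unfolding cp_mult_def by simp
  show ?thesis
  proof (cases "k \<in> G")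
    case False
    have "?P = {}" using False mG by auto
    then have s0: "sum ?f ?P = 0" by (simp only: sum.empty)
    have "mul x oneA k = 0" using trans[OF eq s0] .
    then show ?thesis by (subst if_not_P[OF False], assumption)
  next
    case True
    have sub: "?P \<subseteq> {(k, d k)}"
    proof
      fix p assume "p \<in> ?P"
      obtain g h where pgh: "p = (g,h)" by (cases p)
      have p: "p = (g,h)" "g\<in>G" "h\<in>G" "d g = r h" "m g h = k" using \<open>p \<in> ?P\<close> pgh by auto
      have "h \<in> d ` G" using \<open>p \<in> ?P\<close> pgh by (auto split: if_splits)
      then have "r h = h" by (rule ident(3))
      then have hd: "h = d g" using p(4) by simp
      have "m g (d g) = g" using mgd p(2) by simp
      then have "m g h = g" using hd by simp
      then have "g = k" using p(5) by simp
      then show "p \<in> {(k, d k)}" using p(1) hd by simp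
    qed
    have kd: "d k \<in> d ` G" using True by auto
    have o: "oneA (d k) = \<phi> (d k) (one (d k))" using kd by simp
    have i2: "\<phi> (d k) (one (d k)) \<in> E (iv k)" using phi_in[OF kd one_in[OF kd]] Eiv[OF True] by simp
    have xk: "x k \<in> E k" using xE True by simp
    have v: "?f (k, d k) = x k * rho k"
    proof -
      have "\<beta> k (binv k (x k) * \<phi> (d k) (one (d k))) = x k * rho k"
        using beta_mult[OF True binv_in[OF True xk] i2] beta_binv[OF True xk] by simp
      moreover have "x k * rho k \<in> E k" using EmultR[OF True xk] .
      ultimately show ?thesis using o triple[OF True] kd by simp
    qed
    have "sum ?f ?P = ?f (k, d k)"
    proof (rule pairs_single[OF sub])
      assume "(k, d k) \<notin> ?P"
      then have "x k = 0 \<or> \<phi> (d k) (one (d k)) = 0" using True dG rd mgd o by auto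
      then show "?f (k, d k) = 0" using v rho0[OF True] by auto
    qed
    then show ?thesis using eq v True by simp
  qed
qed

lemma mult_left_oneA:
  assumes xs: "\<forall>k. x k \<noteq> 0 \<longrightarrow> k \<in> G" and xE: "\<forall>k\<in>G. x k \<in> E k"
  shows "mul oneA x k = (if k \<in> G then lam k * x k else 0)"
proof -
  let ?P = "{(g,h). g \<in> G \<and> h \<in> G \<and> oneA g \<noteq> 0 \<and> x h \<noteq> 0 \<and> d g = r h \<and> m g h = k}"
  let ?f = "\<lambda>p. uR (fst p) (snd p) (\<beta> (fst p) (binv (fst p) (oneA (fst p)) * x (snd p)))"
  have eq: "mul oneA x k = sum ?f ?P" unfolding cp_mult_def by simp
  show ?thesis
  proof (cases "k \<in> G")
    case False
    have "?P = {}" using False mG by auto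
    then have s0: "sum ?f ?P = 0" by (simp only: sum.empty)
    have "mul oneA x k = 0" using trans[OF eq s0] .
    then show ?thesis by (subst if_not_P[OF False], assumption)
  next
    case True
    have sub: "?P \<subseteq> {(r k, k)}"
    proof
      fix p assume "p \<in> ?P"
      obtain g h where pgh: "p = (g,h)" by (cases p)
      have p: "p = (g,h)" "g\<in>G" "h\<in>G" "d g = r h" "m g h = k" using \<open>p \<in> ?P\<close> pgh by auto
      have "g \<in> d ` G" using \<open>p \<in> ?P\<close> pgh by (auto split: if_splits)
      then have "d g = g" by (rule ident(2))
      then have hd: "g = r h" using p(4) by simp
      have "m (r h) h = h" using mrg p(3) by simp
      then have "m g h = h" using hd by simp
      then have hk: "h = k" using p(5) by simp
      then show "p \<in> {(r k, k)}" using p(1) hd by simp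
    qed
    have kr: "r k \<in> d ` G" using rdG True by auto
    have o: "oneA (r k) = lam k" using kr by simp
    have ivr: "iv (r k) = r k" using ident[OF kr] by simp
    have lE: "lam k \<in> E (r k)" using phi_in[OF kr one_in[OF kr]] .
    have xk: "x k \<in> E (r k)" using xE True Er by auto
    have bl: "binv (r k) (lam k) = lam k"
      using binv_beta[of "r k" "lam k"] beta_id[OF kr lE] ivr lE ident(1)[OF kr] by simp
    have pE: "lam k * x k \<in> E k" using EmultL[OF True] xE True by simp
    have pE': "lam k * x k \<in> E (r k)" using pE Er True by simp
    have v: "?f (r k, k) = lam k * x k"
      using o bl beta_id[OF kr pE'] triple[OF True] pE kr by simp
    have "sum ?f ?P = ?f (r k, k)"
    proof (rule pairs_single[OF sub])
      assume "(r k, k) \<notin> ?P"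
      then have "x k = 0 \<or> lam k = 0" using True rG dr mrg o by auto
      then show "?f (r k, k) = 0" using v by auto
    qed
    then show ?thesis using eq v True by simp
  qed
qed

lemma mult_sgl:
  assumes g: "g \<in> G" and h: "h \<in> G" and gh: "d g = r h" and a: "a \<in> E g"
  shows "mul (sgl g a) (sgl h b) = sgl (m g h) (uR g h (\<beta> g (binv g a * b)))"
proof
  fix k
  let ?P = "{(g',h'). g' \<in> G \<and> h' \<in> G \<and> sgl g a g' \<noteq> 0 \<and> sgl h b h' \<noteq> 0 \<and> d g' = r h' \<and> m g' h' = k}"
  let ?f = "\<lambda>p. uR (fst p) (snd p) (\<beta> (fst p) (binv (fst p) (sgl g a (fst p)) * sgl h b (snd p)))"
  have eq: "mul (sgl g a) (sgl h b) k = sum ?f ?P" unfolding cp_mult_def by simp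
  have sub: "?P \<subseteq> {(g, h)}" by (auto split: if_splits)
  have z: "a = 0 \<or> b = 0 \<Longrightarrow> uR g h (\<beta> g (binv g a * b)) = 0"
    using binv0[OF g] beta0[OF g] uR0[OF g h gh] by auto
  show "mul (sgl g a) (sgl h b) k = sgl (m g h) (uR g h (\<beta> g (binv g a * b))) k"
  proof (cases "k = m g h")
    case False
    then have "?P = {}" using sub by auto
    then show ?thesis using eq False by simp
  next
    case True
    have "sum ?f ?P = ?f (g, h)"
    proof (rule pairs_single[OF sub])
      assume "(g, h) \<notin> ?P"
      then have "a = 0 \<or> b = 0" using True g h gh by auto
      then show "?f (g, h) = 0" using z by simp
    qed
    then show ?thesis using eq True by simp
  qed
qed

lemma cp_setD: "x \<in> cp_set G P \<Longrightarrow> finite {k. x k \<noteq> 0}"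
  "x \<in> cp_set G P \<Longrightarrow> \<forall>k. x k \<noteq> 0 \<longrightarrow> k \<in> G" "x \<in> cp_set G P \<Longrightarrow> \<forall>k\<in>G. x k \<in> P k"
  unfolding cp_set_def by auto
lemma cp_setI: "finite {k. x k \<noteq> 0} \<Longrightarrow> \<forall>k. x k \<noteq> 0 \<longrightarrow> k \<in> G \<Longrightarrow> \<forall>k\<in>G. x k \<in> P k \<Longrightarrow> x \<in> cp_set G P"
  unfolding cp_set_def by (simp only: mem_Collect_eq)
lemma image_eqI2: "f x = x \<Longrightarrow> x \<in> A \<Longrightarrow> x \<in> f ` A"
  by (metis image_eqI)

lemma B_add: assumes x: "x \<in> Bs" and y: "y \<in> Bs" shows "(\<lambda>k. x k + y k) \<in> Bs"
proof -
  have xs: "\<forall>k. x k \<noteq> 0 \<longrightarrow> k \<in> G" and xE: "\<forall>k\<in>G. x k \<in> E k" and xf: "finite {k. x k \<noteq> 0}"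
    using x unfolding cp_set_def by auto
  have ys: "\<forall>k. y k \<noteq> 0 \<longrightarrow> k \<in> G" and yE: "\<forall>k\<in>G. y k \<in> E k" and yf: "finite {k. y k \<noteq> 0}"
    using y unfolding cp_set_def by auto
  have "{k. x k + y k \<noteq> 0} \<subseteq> {k. x k \<noteq> 0} \<union> {k. y k \<noteq> 0}" by auto
  moreover have "finite ({k. x k \<noteq> 0} \<union> {k. y k \<noteq> 0})" using xf yf by simp
  ultimately have f: "finite {k. x k + y k \<noteq> 0}" by (rule finite_subset)
  have s: "\<forall>k. x k + y k \<noteq> 0 \<longrightarrow> k \<in> G"
  proof (intro allI impI)
    fix k assume "x k + y k \<noteq> 0"
    then have "x k \<noteq> 0 \<or> y k \<noteq> 0" by auto
    then show "k \<in> G" using xs ys by blast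
  qed
  have v: "\<forall>k\<in>G. x k + y k \<in> E k" using xE yE Eadd by simp
  show ?thesis using f s v by (rule cp_setI)
qed

lemma B_zero: "(\<lambda>k. 0) \<in> Bs"
  unfolding cp_set_def using E0 by auto

lemma B_sum: "(\<forall>i<(n::nat). f i \<in> Bs) \<Longrightarrow> (\<lambda>k. \<Sum>i<n. f i k) \<in> Bs"
proof (induction n)
  case 0 then show ?case using B_zero by simp
next
  case (Suc n)
  have "(\<lambda>k. \<Sum>i<Suc n. f i k) = (\<lambda>k. (\<Sum>i<n. f i k) + f n k)" by simp
  moreover have "(\<lambda>k. (\<Sum>i<n. f i k) + f n k) \<in> Bs"
    using B_add[of "\<lambda>k. \<Sum>i<n. f i k" "f n"] Suc by simp
  ultimately show ?case by simp
qed

lemma oneA_B: "oneA \<in> Bs"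
proof -
  have "{k. oneA k \<noteq> 0} \<subseteq> d ` G" by (auto split: if_splits)
  then have f: "finite {k. oneA k \<noteq> 0}" using fin finite_subset by blast
  have s: "\<forall>k. oneA k \<noteq> 0 \<longrightarrow> k \<in> G" using ident(1) by (auto split: if_splits)
  have v: "\<forall>k\<in>G. oneA k \<in> E k" using phi_in one_in E0 by auto
  show ?thesis using f s v by (rule cp_setI)
qed

lemma mul_B: assumes x: "x \<in> Bs" and y: "y \<in> Bs" shows "mul x y \<in> Bs"
proof -
  let ?P = "\<lambda>k. {(g,h). g \<in> G \<and> h \<in> G \<and> x g \<noteq> 0 \<and> y h \<noteq> 0 \<and> d g = r h \<and> m g h = k}"
  let ?f = "\<lambda>p. uR (fst p) (snd p) (\<beta> (fst p) (binv (fst p) (x (fst p)) * y (snd p)))"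
  have eq: "\<And>k. mul x y k = sum ?f (?P k)" unfolding cp_mult_def by simp
  have xs: "\<forall>k. x k \<noteq> 0 \<longrightarrow> k \<in> G" and xE: "\<forall>k\<in>G. x k \<in> E k" and xf: "finite {k. x k \<noteq> 0}"
    using x unfolding cp_set_def by auto
  have ys: "\<forall>k. y k \<noteq> 0 \<longrightarrow> k \<in> G" and yE: "\<forall>k\<in>G. y k \<in> E k" and yf: "finite {k. y k \<noteq> 0}"
    using y unfolding cp_set_def by auto
  have nz: "\<exists>g h. g \<in> G \<and> h \<in> G \<and> x g \<noteq> 0 \<and> y h \<noteq> 0 \<and> d g = r h \<and> m g h = k"
    if "mul x y k \<noteq> 0" for k
  proof (rule ccontr)
    assume "\<not> ?thesis"
    then have "?P k = {}" by auto
    then have "sum ?f (?P k) = 0" by (simp only: sum.empty)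
    then show False using that eq[of k] by simp
  qed
  have "{k. mul x y k \<noteq> 0} \<subseteq> (\<lambda>p. m (fst p) (snd p)) ` ({g. x g \<noteq> 0} \<times> {h. y h \<noteq> 0})"
  proof
    fix k assume "k \<in> {k. mul x y k \<noteq> 0}"
    then obtain g h where "x g \<noteq> 0" "y h \<noteq> 0" "m g h = k" using nz by blast
    then show "k \<in> (\<lambda>p. m (fst p) (snd p)) ` ({g. x g \<noteq> 0} \<times> {h. y h \<noteq> 0})"
      by (metis (mono_tags, lifting) fst_conv snd_conv mem_Collect_eq mem_Sigma_iff rev_image_eqI)
  qed
  moreover have "finite ((\<lambda>p. m (fst p) (snd p)) ` ({g. x g \<noteq> 0} \<times> {h. y h \<noteq> 0}))"
    using xf yf by simp
  ultimately have f: "finite {k. mul x y k \<noteq> 0}" by (rule finite_subset)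
  have s: "\<forall>k. mul x y k \<noteq> 0 \<longrightarrow> k \<in> G" using nz mG by blast
  have v: "mul x y k \<in> E k" if k: "k \<in> G" for k
  proof -
    have "?f p \<in> E k" if p: "p \<in> ?P k" for p
    proof -
      obtain g h where pgh: "p = (g,h)" by (cases p)
      have gh: "g \<in> G" "h \<in> G" "d g = r h" "m g h = k" using p pgh by auto
      have xg: "x g \<in> E g" using xE gh by simp
      have yh0: "y h \<in> E h" using yE gh by simp
      have yh: "y h \<in> E (iv g)" using yh0 Er[OF gh(2)] Eiv[OF gh(1)] gh(3) by simp
      have "binv g (x g) * y h \<in> E (iv g)" using EmultL[OF ivG[OF gh(1)] yh] .
      then have "\<beta> g (binv g (x g) * y h) \<in> E g" using beta_in gh by simp
      then have "?f p \<in> E g" using uR_in[OF gh(1-3)] pgh by simp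
      moreover have "E k = E g" using Er[of k] Er[of g] rm[OF gh(1-3)] gh k by simp
      ultimately show ?thesis by simp
    qed
    then have "\<forall>p\<in>?P k. ?f p \<in> E k" by (intro ballI)
    then have "sum ?f (?P k) \<in> E k" by (rule ideal_sum[OF E_ideal[OF k]])
    then show ?thesis by (rule ssubst[OF eq[of k]])
  qed
  show ?thesis using f s v by (intro cp_setI) auto
qed

lemma Bs_props: "x \<in> Bs \<Longrightarrow> (\<forall>k. x k \<noteq> 0 \<longrightarrow> k \<in> G) \<and> (\<forall>k\<in>G. x k \<in> E k) \<and> finite {k. x k \<noteq> 0}"
  unfolding cp_set_def by auto

lemma part1: "(\<lambda>b. mul b oneA) ` Bs = cp_set G (\<lambda>g. \<beta> g ` \<phi> (d g) ` D (d g))"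
proof
  show "(\<lambda>b. mul b oneA) ` Bs \<subseteq> cp_set G (\<lambda>g. \<beta> g ` \<phi> (d g) ` D (d g))"
  proof
    fix z assume "z \<in> (\<lambda>b. mul b oneA) ` Bs"
    then obtain b where b: "b \<in> Bs" and z: "z = mul b oneA" by blast
    have bs: "\<forall>k. b k \<noteq> 0 \<longrightarrow> k \<in> G" and bE: "\<forall>k\<in>G. b k \<in> E k" and bf: "finite {k. b k \<noteq> 0}"
      using Bs_props[OF b] by blast+
    have zk: "z k = (if k \<in> G then b k * rho k else 0)" for k
      unfolding z by (rule mult_right_oneA[OF bs bE])
    have "{k. z k \<noteq> 0} \<subseteq> {k. b k \<noteq> 0}"
    proof
      fix k assume "k \<in> {k. z k \<noteq> 0}"
      then show "k \<in> {k. b k \<noteq> 0}" unfolding zk by (auto split: if_splits)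
    qed
    then have f: "finite {k. z k \<noteq> 0}" using bf finite_subset by blast
    have s: "\<forall>k. z k \<noteq> 0 \<longrightarrow> k \<in> G" unfolding zk by (auto split: if_splits)
    have v: "\<forall>k\<in>G. z k \<in> II k" unfolding zk using mult_rho_in bE by simp
    show "z \<in> cp_set G (\<lambda>g. \<beta> g ` \<phi> (d g) ` D (d g))" using f s v by (rule cp_setI)
  qed
next
  show "cp_set G (\<lambda>g. \<beta> g ` \<phi> (d g) ` D (d g)) \<subseteq> (\<lambda>b. mul b oneA) ` Bs"
  proof
    fix c assume c: "c \<in> cp_set G (\<lambda>g. \<beta> g ` \<phi> (d g) ` D (d g))"
    have cs: "\<forall>k. c k \<noteq> 0 \<longrightarrow> k \<in> G" and cI: "\<forall>k\<in>G. c k \<in> II k" and cf: "finite {k. c k \<noteq> 0}"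
      using cp_setD[OF c] by blast+
    have cE: "\<forall>k\<in>G. c k \<in> E k"
    proof
      fix k assume k: "k \<in> G"
      have "c k \<in> II k" using cI k by blast
      then show "c k \<in> E k" using II_sub[OF k] by blast
    qed
    have cB: "c \<in> Bs" using cp_setI[OF cf cs cE] .
    have "mul c oneA = c"
    proof
      fix k show "mul c oneA k = c k"
      proof (cases "k \<in> G")
        case True
        then show ?thesis using mult_right_oneA[OF cs cE, of k] rho_unit(1)[OF True] cI by simp
      next
        case False
        then have "c k = 0" using cs by blast
        then show ?thesis using mult_right_oneA[OF cs cE, of k] False by simp
      qed
    qed
    then show "c \<in> (\<lambda>b. mul b oneA) ` Bs" using cB by (rule image_eqI2)
  qed
qed

lemma part2: "(\<lambda>b. mul oneA b) ` Bs = cp_set G (\<lambda>g. \<phi> (r g) ` D (r g))"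
proof
  show "(\<lambda>b. mul oneA b) ` Bs \<subseteq> cp_set G (\<lambda>g. \<phi> (r g) ` D (r g))"
  proof
    fix z assume "z \<in> (\<lambda>b. mul oneA b) ` Bs"
    then obtain b where b: "b \<in> Bs" and z: "z = mul oneA b" by blast
    have bs: "\<forall>k. b k \<noteq> 0 \<longrightarrow> k \<in> G" and bE: "\<forall>k\<in>G. b k \<in> E k" and bf: "finite {k. b k \<noteq> 0}"
      using Bs_props[OF b] by blast+
    have zk: "z k = (if k \<in> G then lam k * b k else 0)" for k
      unfolding z by (rule mult_left_oneA[OF bs bE])
    have "{k. z k \<noteq> 0} \<subseteq> {k. b k \<noteq> 0}"
    proof
      fix k assume "k \<in> {k. z k \<noteq> 0}"
      then show "k \<in> {k. b k \<noteq> 0}" unfolding zk by (auto split: if_splits)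
    qed
    then have f: "finite {k. z k \<noteq> 0}" using bf finite_subset by blast
    have s: "\<forall>k. z k \<noteq> 0 \<longrightarrow> k \<in> G" unfolding zk by (auto split: if_splits)
    have v: "\<forall>k\<in>G. z k \<in> JJ k" unfolding zk using lam_mult_in bE by simp
    show "z \<in> cp_set G (\<lambda>g. \<phi> (r g) ` D (r g))" using f s v by (rule cp_setI)
  qed
next
  show "cp_set G (\<lambda>g. \<phi> (r g) ` D (r g)) \<subseteq> (\<lambda>b. mul oneA b) ` Bs"
  proof
    fix c assume c: "c \<in> cp_set G (\<lambda>g. \<phi> (r g) ` D (r g))"
    have cs: "\<forall>k. c k \<noteq> 0 \<longrightarrow> k \<in> G" and cI: "\<forall>k\<in>G. c k \<in> JJ k" and cf: "finite {k. c k \<noteq> 0}"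
      using cp_setD[OF c] by blast+
    have cE: "\<forall>k\<in>G. c k \<in> E k"
    proof
      fix k assume k: "k \<in> G"
      have "c k \<in> JJ k" using cI k by blast
      then show "c k \<in> E k" using JJ_sub[OF k] by blast
    qed
    have cB: "c \<in> Bs" using cp_setI[OF cf cs cE] .
    have "mul oneA c = c"
    proof
      fix k show "mul oneA c k = c k"
      proof (cases "k \<in> G")
        case True
        then show ?thesis using mult_left_oneA[OF cs cE, of k] lam_unit[OF True] cI by simp
      next
        case False
        then have "c k = 0" using cs by blast
        then show ?thesis using mult_left_oneA[OF cs cE, of k] False by simp
      qed
    qed
    then show "c \<in> (\<lambda>b. mul oneA b) ` Bs" using cB by (rule image_eqI2)
  qed
qed

lemma part3: "(\<lambda>b. mul (mul oneA b) oneA) ` Bs = cp_set G (\<lambda>g. \<phi> (r g) ` D g)"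
proof
  show "(\<lambda>b. mul (mul oneA b) oneA) ` Bs \<subseteq> cp_set G (\<lambda>g. \<phi> (r g) ` D g)"
  proof
    fix z assume "z \<in> (\<lambda>b. mul (mul oneA b) oneA) ` Bs"
    then obtain b where b: "b \<in> Bs" and z: "z = mul (mul oneA b) oneA" by blast
    have bs: "\<forall>k. b k \<noteq> 0 \<longrightarrow> k \<in> G" and bE: "\<forall>k\<in>G. b k \<in> E k" and bf: "finite {k. b k \<noteq> 0}"
      using Bs_props[OF b] by blast+
    have yB: "mul oneA b \<in> Bs" using mul_B[OF oneA_B b] .
    have ys: "\<forall>k. mul oneA b k \<noteq> 0 \<longrightarrow> k \<in> G" and yE: "\<forall>k\<in>G. mul oneA b k \<in> E k"
      using Bs_props[OF yB] by blast+
    have yk: "mul oneA b k = (if k \<in> G then lam k * b k else 0)" for k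
      using mult_left_oneA[OF bs bE] by simp
    have zk: "z k = (if k \<in> G then lam k * b k * rho k else 0)" for k
      using z mult_right_oneA[OF ys yE, of k] yk[of k] by simp
    have "{k. z k \<noteq> 0} \<subseteq> {k. b k \<noteq> 0}"
    proof
      fix k assume "k \<in> {k. z k \<noteq> 0}"
      then show "k \<in> {k. b k \<noteq> 0}" unfolding zk by (auto split: if_splits)
    qed
    then have f: "finite {k. z k \<noteq> 0}" using bf finite_subset by blast
    have s: "\<forall>k. z k \<noteq> 0 \<longrightarrow> k \<in> G" unfolding zk by (auto split: if_splits)
    have v: "z k \<in> \<phi> (r k) ` D k" if k: "k \<in> G" for k
    proof -
      have l: "lam k * b k \<in> JJ k" using lam_mult_in k bE by simp
      have l': "lam k * b k \<in> E k" using l JJ_sub k by blast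
      have "lam k * b k * rho k \<in> JJ k" using JJ_multR[OF k l rho_in_E[OF k]] .
      moreover have "lam k * b k * rho k \<in> II k" using mult_rho_in[OF k l'] .
      ultimately show ?thesis using zk glob_int[OF k] k by simp
    qed
    show "z \<in> cp_set G (\<lambda>g. \<phi> (r g) ` D g)" using f s v by (intro cp_setI) auto
  qed
next
  show "cp_set G (\<lambda>g. \<phi> (r g) ` D g) \<subseteq> (\<lambda>b. mul (mul oneA b) oneA) ` Bs"
  proof
    fix c assume c: "c \<in> cp_set G (\<lambda>g. \<phi> (r g) ` D g)"
    have cs: "\<forall>k. c k \<noteq> 0 \<longrightarrow> k \<in> G" and cI: "\<forall>k\<in>G. c k \<in> \<phi> (r k) ` D k" and cf: "finite {k. c k \<noteq> 0}"
      using cp_setD[OF c] by blast+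
    have cJ: "\<forall>k\<in>G. c k \<in> JJ k" and cII: "\<forall>k\<in>G. c k \<in> II k"
    proof -
      have "c k \<in> JJ k \<inter> II k" if k: "k \<in> G" for k
      proof -
        have "c k \<in> \<phi> (r k) ` D k" using cI k by blast
        then show ?thesis using glob_int[OF k] by simp
      qed
      then show "\<forall>k\<in>G. c k \<in> JJ k" "\<forall>k\<in>G. c k \<in> II k" by blast+
    qed
    have cE: "\<forall>k\<in>G. c k \<in> E k"
    proof
      fix k assume k: "k \<in> G"
      have "c k \<in> JJ k" using cJ k by blast
      then show "c k \<in> E k" using JJ_sub[OF k] by blast
    qed
    have cB: "c \<in> Bs" using cp_setI[OF cf cs cE] .
    have y: "mul oneA c = c"
    proof
      fix k show "mul oneA c k = c k"
      proof (cases "k \<in> G")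
        case True
        then show ?thesis using mult_left_oneA[OF cs cE, of k] lam_unit[OF True] cJ by simp
      next
        case False
        then have "c k = 0" using cs by blast
        then show ?thesis using mult_left_oneA[OF cs cE, of k] False by simp
      qed
    qed
    have "mul c oneA = c"
    proof
      fix k show "mul c oneA k = c k"
      proof (cases "k \<in> G")
        case True
        then show ?thesis using mult_right_oneA[OF cs cE, of k] rho_unit(1)[OF True] cII by simp
      next
        case False
        then have "c k = 0" using cs by blast
        then show ?thesis using mult_right_oneA[OF cs cE, of k] False by simp
      qed
    qed
    then have "mul (mul oneA c) oneA = c" using y by simp
    then show "c \<in> (\<lambda>b. mul (mul oneA b) oneA) ` Bs" using cB by (rule image_eqI2[where f="\<lambda>b. mul (mul oneA b) oneA"])
  qed
qed

abbreviation "TT \<equiv> {(\<lambda>k. \<Sum>i<n. mul (mul (b i) oneA) (b' i) k) | (n::nat) b b'. \<forall>i<n. b i \<in> Bs \<and> b' i \<in> Bs}"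

lemma TT_sub: "TT \<subseteq> Bs"
proof
  fix x assume "x \<in> TT"
  then obtain n b b' where x: "x = (\<lambda>k. \<Sum>i<(n::nat). mul (mul (b i) oneA) (b' i) k)"
    and bb: "\<forall>i<n. b i \<in> Bs \<and> b' i \<in> Bs" by blast
  have "\<forall>i<n. mul (mul (b i) oneA) (b' i) \<in> Bs" using bb mul_B oneA_B by blast
  then show "x \<in> Bs" unfolding x by (rule B_sum)
qed

lemma TT_I: "(\<forall>i<(n::nat). b i \<in> Bs \<and> b' i \<in> Bs) \<Longrightarrow> x = (\<lambda>k. \<Sum>i<n. mul (mul (b i) oneA) (b' i) k) \<Longrightarrow> x \<in> TT"
  by blast

lemma TT_zero: "(\<lambda>k. 0) \<in> TT"
  by (rule TT_I[of 0 "\<lambda>_ _. 0" "\<lambda>_ _. 0"]) simp_all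

lemma TT_add: assumes x: "x \<in> TT" and y: "y \<in> TT" shows "(\<lambda>k. x k + y k) \<in> TT"
proof -
  obtain n b b' where xe: "x = (\<lambda>k. \<Sum>i<(n::nat). mul (mul (b i) oneA) (b' i) k)"
    and bb: "\<forall>i<n. b i \<in> Bs \<and> b' i \<in> Bs" using x by blast
  obtain n2 c c' where ye: "y = (\<lambda>k. \<Sum>i<(n2::nat). mul (mul (c i) oneA) (c' i) k)"
    and cc: "\<forall>i<n2. c i \<in> Bs \<and> c' i \<in> Bs" using y by blast
  define e where "e i = (if i < n then b i else c (i - n))" for i
  define e' where "e' i = (if i < n then b' i else c' (i - n))" for i
  have ee: "\<forall>i<n+n2. e i \<in> Bs \<and> e' i \<in> Bs"
  proof (intro allI impI)
    fix i assume i: "i < n + n2"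
    show "e i \<in> Bs \<and> e' i \<in> Bs"
    proof (cases "i < n")
      case True then show ?thesis using bb unfolding e_def e'_def by simp
    next
      case False then have "i - n < n2" using i by simp
      then show ?thesis using cc False unfolding e_def e'_def by simp
    qed
  qed
  have "(\<lambda>k. x k + y k) = (\<lambda>k. \<Sum>i<n+n2. mul (mul (e i) oneA) (e' i) k)"
  proof
    fix k
    have "(\<Sum>i<n+n2. mul (mul (e i) oneA) (e' i) k) =
      (\<Sum>i<n. mul (mul (e i) oneA) (e' i) k) + (\<Sum>i<n2. mul (mul (e (n+i)) oneA) (e' (n+i)) k)"
      by (rule sum_split_nat)
    moreover have "(\<Sum>i<n. mul (mul (e i) oneA) (e' i) k) = (\<Sum>i<n. mul (mul (b i) oneA) (b' i) k)"
      unfolding e_def e'_def by (rule sum.cong) simp_all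
    moreover have "(\<Sum>i<n2. mul (mul (e (n+i)) oneA) (e' (n+i)) k) = (\<Sum>i<n2. mul (mul (c i) oneA) (c' i) k)"
      unfolding e_def e'_def by simp
    ultimately show "x k + y k = (\<Sum>i<n+n2. mul (mul (e i) oneA) (e' i) k)" unfolding xe ye by simp
  qed
  then show ?thesis using ee by (intro TT_I[of "n+n2" e e'])
qed

lemma TT_sum_set: "finite A \<Longrightarrow> (\<forall>a\<in>A. f a \<in> TT) \<Longrightarrow> (\<lambda>k. \<Sum>a\<in>A. f a k) \<in> TT"
proof (induction A rule: finite_induct)
  case empty then show ?case using TT_zero by simp
next
  case (insert a F)
  have "(\<lambda>k. \<Sum>a\<in>insert a F. f a k) = (\<lambda>k. f a k + (\<Sum>a\<in>F. f a k))" using insert(1,2) by simp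
  moreover have "f a \<in> TT" using insert(4) by simp
  moreover have "(\<lambda>k. \<Sum>a\<in>F. f a k) \<in> TT" using insert(3,4) by simp
  ultimately show ?case using TT_add[of "f a" "\<lambda>k. \<Sum>a\<in>F. f a k"] by simp
qed

lemma sgl_B: "g \<in> G \<Longrightarrow> c \<in> E g \<Longrightarrow> sgl g c \<in> Bs"
proof -
  assume g: "g \<in> G" and c: "c \<in> E g"
  have f: "finite {k. sgl g c k \<noteq> 0}" by (rule finite_subset[of _ "{g}"]) auto
  have s: "\<forall>k. sgl g c k \<noteq> 0 \<longrightarrow> k \<in> G" using g by auto
  have v: "\<forall>k\<in>G. sgl g c k \<in> E k" using c E0 by auto
  show ?thesis using f s v by (intro cp_setI) auto
qed

lemma TT_sgl: assumes g: "g \<in> G" and h: "h \<in> G" and rhg: "r h = r g" and c: "c \<in> II h"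
  shows "sgl g c \<in> TT"
proof -
  define t where "t = m (iv h) g"
  have ivh: "iv h \<in> G" using ivG h by simp
  have c1: "d (iv h) = r g" using div h rhg by simp
  have tG: "t \<in> G" unfolding t_def using mG[OF ivh g c1] .
  have rt: "r t = d h" unfolding t_def using rm[OF ivh g c1] riv h by simp
  have ht: "d h = r t" using rt by simp
  have mht: "m h t = g"
  proof -
    have "m h t = m (m h (iv h)) g" unfolding t_def using assoc[OF h ivh g] riv[OF h] c1 by simp
    also have "\<dots> = m (r g) g" using mgiv[OF h] rhg by simp
    also have "\<dots> = g" using mrg[OF g] .
    finally show ?thesis .
  qed
  have cE: "c \<in> E h" using c II_sub[OF h] by blast
  have ui: "inv_mult (E h) (uR h t) (uL h t) (uiR h t) (uiL h t)" using u_inv[OF h tG ht] .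
  have uic: "uiR h t c \<in> E h" using ui cE unfolding inv_mult_def is_mult_def by blast
  have rhoE: "rho h \<in> E h" using rho_in_E[OF h] .
  have uimul: "uiR h t (rho h * c) = rho h * uiR h t c" using ui cE rhoE unfolding inv_mult_def is_mult_def by blast
  have uRuiR: "uR h t (uiR h t c) = c" using ui cE unfolding inv_mult_def by blast
  define y where "y = binv h (uiR h t c)"
  have yiv: "y \<in> E (iv h)" unfolding y_def using binv_in[OF h uic] .
  have yE: "y \<in> E t" using yiv Eiv[OF h] Er[OF tG] rt by simp
  have b0: "sgl h (rho h) \<in> Bs" using sgl_B[OF h rhoE] .
  have b0': "sgl t y \<in> Bs" using sgl_B[OF tG yE] .
  have b0s: "\<forall>k. sgl h (rho h) k \<noteq> 0 \<longrightarrow> k \<in> G" and b0E: "\<forall>k\<in>G. sgl h (rho h) k \<in> E k"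
    using Bs_props[OF b0] by blast+
  have m1: "mul (sgl h (rho h)) oneA = sgl h (rho h)"
  proof
    fix k
    show "mul (sgl h (rho h)) oneA k = sgl h (rho h) k"
    proof (cases "k = h")
      case True
      then show ?thesis using mult_right_oneA[OF b0s b0E, of k] h rho_unit(1)[OF h rho_in[OF h]] by simp
    next
      case False
      then show ?thesis using mult_right_oneA[OF b0s b0E, of k] by simp
    qed
  qed
  have m2: "mul (sgl h (rho h)) (sgl t y) = sgl (m h t) (uR h t (\<beta> h (binv h (rho h) * y)))"
    using mult_sgl[OF h tG ht rhoE] .
  have "\<beta> h (binv h (rho h) * y) = rho h * uiR h t c"
    using beta_mult[OF h binv_in[OF h rhoE] yiv] beta_binv[OF h rhoE] beta_binv[OF h uic] unfolding y_def by simp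
  also have "\<dots> = uiR h t c" using uimul rho_unit(2)[OF h c] by simp
  finally have ures: "uR h t (\<beta> h (binv h (rho h) * y)) = c" using uRuiR by simp
  have eq: "mul (mul (sgl h (rho h)) oneA) (sgl t y) = sgl g c" by (simp only: m1 m2 mht ures)
  show ?thesis
  proof (rule TT_I[of 1 "\<lambda>_. sgl h (rho h)" "\<lambda>_. sgl t y"])
    show "\<forall>i<(1::nat). sgl h (rho h) \<in> Bs \<and> sgl t y \<in> Bs" using b0 b0' by simp
    show "sgl g c = (\<lambda>k. \<Sum>i<(1::nat). mul (mul (sgl h (rho h)) oneA) (sgl t y) k)"
      using eq by simp
  qed
qed

lemma TT_sgl_E: assumes g: "g \<in> G" and c: "c \<in> E g" shows "sgl g c \<in> TT"
proof -
  have "c \<in> sum_sets {h\<in>G. r h = r g} (\<lambda>h. \<beta> h ` \<phi> (d h) ` D (d h))" using c E_sum[OF g] by simp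
  then obtain n f j where cs: "c = (\<Sum>i<(n::nat). f i)" and fj: "\<forall>i<n. j i \<in> {h\<in>G. r h = r g} \<and> f i \<in> II (j i)"
    unfolding sum_sets_def by blast
  have "sgl g c = (\<lambda>k. \<Sum>i\<in>{..<n}. sgl g (f i) k)"
  proof
    fix k show "sgl g c k = (\<Sum>i\<in>{..<n}. sgl g (f i) k)" using cs by (cases "k = g") simp_all
  qed
  moreover have "\<forall>i\<in>{..<n}. sgl g (f i) \<in> TT"
  proof
    fix i assume "i \<in> {..<n}"
    then have "j i \<in> G" "r (j i) = r g" "f i \<in> II (j i)" using fj by auto
    then show "sgl g (f i) \<in> TT" using TT_sgl[OF g] by blast
  qed
  ultimately show ?thesis using TT_sum_set[of "{..<n}" "\<lambda>i. sgl g (f i)"] by simp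
qed

lemma part4: "TT = Bs"
proof
  show "TT \<subseteq> Bs" by (rule TT_sub)
next
  show "Bs \<subseteq> TT"
  proof
    fix b assume b: "b \<in> Bs"
    have bs: "\<forall>k. b k \<noteq> 0 \<longrightarrow> k \<in> G" and bE: "\<forall>k\<in>G. b k \<in> E k" and bf: "finite {k. b k \<noteq> 0}"
      using Bs_props[OF b] by blast+
    have beq: "b = (\<lambda>k. \<Sum>g\<in>{k. b k \<noteq> 0}. sgl g (b g) k)"
    proof
      fix k
      have "(\<Sum>g\<in>{k. b k \<noteq> 0}. sgl g (b g) k) = (if k \<in> {k. b k \<noteq> 0} then b k else 0)"
        by (rule sum.delta'[OF bf])
      then show "b k = (\<Sum>g\<in>{k. b k \<noteq> 0}. sgl g (b g) k)" by (cases "b k = 0") simp_all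
    qed
    have all: "\<forall>g\<in>{k. b k \<noteq> 0}. sgl g (b g) \<in> TT"
    proof
      fix g assume "g \<in> {k. b k \<noteq> 0}"
      then have g: "g \<in> G" using bs by blast
      have "b g \<in> E g" using bE g by blast
      then show "sgl g (b g) \<in> TT" by (rule TT_sgl_E[OF g])
    qed
    have tt: "(\<lambda>k. \<Sum>g\<in>{k. b k \<noteq> 0}. sgl g (b g) k) \<in> TT" using TT_sum_set[OF bf all] .
    show "b \<in> TT" by (subst beq) (rule tt)
  qed
qed

lemma all_parts:
  "((\<lambda>b. mul b oneA) ` Bs = cp_set G (\<lambda>g. \<beta> g ` \<phi> (d g) ` D (d g))) \<and>
    ((\<lambda>b. mul oneA b) ` Bs = cp_set G (\<lambda>g. \<phi> (r g) ` D (r g))) \<and>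
    ((\<lambda>b. mul (mul oneA b) oneA) ` Bs = cp_set G (\<lambda>g. \<phi> (r g) ` D g)) \<and>
    ({(\<lambda>k. \<Sum>i<n. mul (mul (b i) oneA) (b' i) k) | (n::nat) b b'.
            \<forall>i<n. b i \<in> Bs \<and> b' i \<in> Bs} = Bs)"
  using part1 part2 part3 part4 by blast

end

theorem mainTheorem3:
  fixes G :: "'g set" and d r iv :: "'g \<Rightarrow> 'g" and m :: "'g \<Rightarrow> 'g \<Rightarrow> 'g"
    and D :: "'g \<Rightarrow> 'r::ring set" and \<alpha> :: "'g \<Rightarrow> 'r \<Rightarrow> 'r"
    and wR wL wiR wiL :: "'g \<Rightarrow> 'g \<Rightarrow> 'r \<Rightarrow> 'r"
    and one :: "'g \<Rightarrow> 'r"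
    and E :: "'g \<Rightarrow> 't::ring set" and \<beta> :: "'g \<Rightarrow> 't \<Rightarrow> 't"
    and uR uL uiR uiL :: "'g \<Rightarrow> 'g \<Rightarrow> 't \<Rightarrow> 't"
    and \<phi> :: "'g \<Rightarrow> 'r \<Rightarrow> 't"
  assumes grpd: "groupoid G d r iv m"
    and fin: "finite (d ` G)"
    and alpha: "twisted_partial_action G d r iv m D \<alpha> wR wL wiR wiL"
    and units: "\<forall>e\<in>d ` G. one e \<in> D e \<and> (\<forall>x\<in>D e. one e * x = x \<and> x * one e = x)"
    and beta: "global_action G d r iv m E \<beta> uR uL uiR uiL"
    and glob: "globalization G d r iv m D \<alpha> wR wL E \<beta> uR uL \<phi>"
  defines "B \<equiv> cp_set G E"
    and "oneA \<equiv> (\<lambda>k. if k \<in> d ` G then \<phi> k (one k) else 0)"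
    and "mult \<equiv> cp_mult G d r iv m E \<beta> uR"
  shows "((\<lambda>b. mult b oneA) ` B = cp_set G (\<lambda>g. \<beta> g ` \<phi> (d g) ` D (d g))) \<and>
    ((\<lambda>b. mult oneA b) ` B = cp_set G (\<lambda>g. \<phi> (r g) ` D (r g))) \<and>
    ((\<lambda>b. mult (mult oneA b) oneA) ` B = cp_set G (\<lambda>g. \<phi> (r g) ` D g)) \<and>
    ({(\<lambda>k. \<Sum>i<n. mult (mult (b i) oneA) (b' i) k) | (n::nat) b b'.
            \<forall>i<n. b i \<in> B \<and> b' i \<in> B} = B)"
proof -
  interpret setting G d r iv m D \<alpha> wR wL wiR wiL one E \<beta> uR uL uiR uiL \<phi>
    using grpd fin alpha units beta glob by (unfold_locales)
  show ?thesis unfolding B_def oneA_def mult_def using all_parts by simp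
qed

end
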